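(* There exists a family of broadcast protocols $(P_n)_{n}$, $P_n=(Q_n,I_n,M_n,\Delta_n)$, with target sets $F_n\subseteq Q_n$ and $|Q_n|\in O(n)$, such that for every $n$ there exist both a reconfigurable execution and a lossy execution of $P_n$ covering $F_n$, and every reconfigurable or lossy execution of $P_n$ covering $F_n$ has $\Omega(n)$ nodes and length $\Omega(n^2)$.
   Context: A broadcast protocol is a tuple $P=(Q,I,M,\Delta)$ where $Q$ is a finite set of states, $I\subseteq Q$ initial states, $M$ a finite message alphabet and $\Delta\subseteq Q\times\{!!m,\ ??m \mid m\in M\}\times Q$ ($!!m$ = broadcast, $??m$ = reception); protocols are complete for receptions (for every $q$, $m$ there is $q'$ with $(q,??m,q')\in\Delta$). A configuration is a finite undirected graph $\gamma=(V,E,L)$, $E$ symmetric irreflexive, $L:V\to Q$; initial if $L(V)\subseteq I$. A reconfigurable step from $(V,E,L)$ to $(V,E',L')$ ($E'$ arbitrary): some node $v$ and $m$ with $(L(v),!!m,L'(v))\in\Delta$, every neighbour $v'$ of $v$ in $E$ satisfies $(L(v'),??m,L'(v'))\in\Delta$, every other node keeps its label. A lossy step from $(V,E,L)$ to $(V,E,L')$ (edges fixed): some $v$, $m$ with $(L(v),!!m,L'(v))\in\Delta$ and either all other nodes keep their labels (lost broadcast) or as in the reconfigurable step with $E$ (successful broadcast). A reconfigurable (resp. lossy) execution is a sequence $\gamma_0,\dots,\gamma_r$ with $\gamma_0$ initial and consecutive reconfigurable (resp. lossy) steps; its number of nodes is $|V|$, its length is $r$, and it covers $F$ if some node of $\gamma_r$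 has a label in $F$. *)

theory Defs
  imports Complex_Main
begin

datatype 'm action = Bcast 'm | Recv 'm

record ('q, 'm) protocol =
  states :: "'q set"
  init :: "'q set"
  msgs :: "'m set"
  trans :: "('q \<times> 'm action \<times> 'q) set"

definition act_msg :: "'m action \<Rightarrow> 'm" where
  "act_msg a = (case a of Bcast m \<Rightarrow> m | Recv m \<Rightarrow> m)"

definition is_protocol :: "('q, 'm) protocol \<Rightarrow> bool" where
  "is_protocol P \<longleftrightarrow> finite (states P) \<and> init P \<subseteq> states P \<and> finite (msgs P) \<and>
     (\<forall>(q, a, q') \<in> trans P. q \<in> states P \<and> q' \<in> states P \<and> act_msg a \<in> msgs P) \<and>
     (\<forall>q \<in> states P. \<forall>m \<in> msgs P. \<exists>q'. (q, Recv m, q') \<in> trans P)"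

text \<open>Configurations: vertex set V (nodes are naturals), undirected edge set E
(symmetric irreflexive relation on V), labelling L (only its values on V matter).\<close>
type_synonym 'q config = "nat set \<times> (nat \<times> nat) set \<times> (nat \<Rightarrow> 'q)"

definition is_graph :: "nat set \<Rightarrow> (nat \<times> nat) set \<Rightarrow> bool" where
  "is_graph V E \<longleftrightarrow> finite V \<and> E \<subseteq> V \<times> V \<and> sym E \<and> irrefl E"

definition is_config :: "('q, 'm) protocol \<Rightarrow> 'q config \<Rightarrow> bool" where
  "is_config P c = (case c of (V, E, L) \<Rightarrow> is_graph V E \<and> L ` V \<subseteq> states P)"

definition is_initial :: "('q, 'm) protocol \<Rightarrow> 'q config \<Rightarrow> bool" where
  "is_initial P c = (case c of (V, E, L) \<Rightarrow> is_config P c \<and> L ` V \<subseteq> init P)"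

definition bcast_ok :: "('q, 'm) protocol \<Rightarrow> nat set \<Rightarrow> (nat \<times> nat) set \<Rightarrow> (nat \<Rightarrow> 'q)
     \<Rightarrow> (nat \<Rightarrow> 'q) \<Rightarrow> nat \<Rightarrow> 'm \<Rightarrow> bool" where
  "bcast_ok P V E L L' v m \<longleftrightarrow> v \<in> V \<and> (L v, Bcast m, L' v) \<in> trans P \<and>
     (\<forall>w \<in> V. (v, w) \<in> E \<longrightarrow> (L w, Recv m, L' w) \<in> trans P) \<and>
     (\<forall>w \<in> V. w \<noteq> v \<and> (v, w) \<notin> E \<longrightarrow> L' w = L w)"

definition reconf_step :: "('q, 'm) protocol \<Rightarrow> 'q config \<Rightarrow> 'q config \<Rightarrow> bool" where
  "reconf_step P c c' = (case c of (V, E, L) \<Rightarrow> case c' of (V', E', L') \<Rightarrow>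
     V' = V \<and> (\<exists>v m. bcast_ok P V E L L' v m))"

definition lossy_step :: "('q, 'm) protocol \<Rightarrow> 'q config \<Rightarrow> 'q config \<Rightarrow> bool" where
  "lossy_step P c c' = (case c of (V, E, L) \<Rightarrow> case c' of (V', E', L') \<Rightarrow>
     V' = V \<and> E' = E \<and>
     (\<exists>v m. (v \<in> V \<and> (L v, Bcast m, L' v) \<in> trans P \<and> (\<forall>w \<in> V. w \<noteq> v \<longrightarrow> L' w = L w))
            \<or> bcast_ok P V E L L' v m))"

text \<open>An execution gamma_0..gamma_r as a nonempty list of configurations; its length is r.\<close>
definition is_exec :: "('q, 'm) protocol \<Rightarrow> ('q config \<Rightarrow> 'q config \<Rightarrow> bool) \<Rightarrow> 'q config list \<Rightarrow> bool" where
  "is_exec P step cs \<longleftrightarrow> cs \<noteq> [] \<and> is_initial P (hd cs) \<and> (\<forall>c \<in> set cs. is_config P c) \<and>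
     (\<forall>i. Suc i < length cs \<longrightarrow> step (cs ! i) (cs ! Suc i))"

definition reconf_exec :: "('q, 'm) protocol \<Rightarrow> 'q config list \<Rightarrow> bool" where
  "reconf_exec P cs \<longleftrightarrow> is_exec P (reconf_step P) cs"

definition lossy_exec :: "('q, 'm) protocol \<Rightarrow> 'q config list \<Rightarrow> bool" where
  "lossy_exec P cs \<longleftrightarrow> is_exec P (lossy_step P) cs"

definition exec_nodes :: "'q config list \<Rightarrow> nat" where
  "exec_nodes cs = card (fst (hd cs))"

definition exec_length :: "'q config list \<Rightarrow> nat" where
  "exec_length cs = length cs - 1"

definition covers :: "'q config list \<Rightarrow> 'q set \<Rightarrow> bool" where
  "covers cs F = (case last cs of (V, E, L) \<Rightarrow> \<exists>v \<in> V. L v \<in> F)"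

end

theory Submission
  imports Defs
begin
definition Pr :: "nat \<Rightarrow> (nat, nat) protocol" where
  "Pr n = \<lparr> states = {..2*n+2}, init = {0, n+2}, msgs = {0,1},
     trans = {(j, Bcast 0, Suc j) | j. j < n} \<union> {(n, Bcast 1, Suc n)}
       \<union> {(q, Recv m, q) | q m. q \<le> 2*n+2 \<and> m \<le> 1}
       \<union> {(q, Recv 1, Suc q) | q. n+2 \<le> q \<and> q < 2*n+2} \<rparr>"

lemma bcast_iff: "(q, Bcast m, q') \<in> trans (Pr n) \<longleftrightarrow>
   (m = 0 \<and> q < n \<and> q' = Suc q) \<or> (m = 1 \<and> q = n \<and> q' = Suc n)"
  by (auto simp: Pr_def)

lemma recv_iff: "(q, Recv m, q') \<in> trans (Pr n) \<longleftrightarrow>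
   (q \<le> 2*n+2 \<and> m \<le> 1 \<and> q' = q) \<or> (m = 1 \<and> n+2 \<le> q \<and> q < 2*n+2 \<and> q' = Suc q)"
  by (auto simp: Pr_def)

lemma Pr_simps[simp]: "states (Pr n) = {..2*n+2}" "init (Pr n) = {0, n+2}" "msgs (Pr n) = {0,1}"
  by (auto simp: Pr_def)

lemma Pr_protocol: "is_protocol (Pr n)"
  unfolding is_protocol_def
proof (intro conjI)
  show "\<forall>(q, a, q') \<in> trans (Pr n). q \<in> states (Pr n) \<and> q' \<in> states (Pr n) \<and> act_msg a \<in> msgs (Pr n)"
    by (auto simp: Pr_def act_msg_def)
  show "\<forall>q \<in> states (Pr n). \<forall>m \<in> msgs (Pr n). \<exists>q'. (q, Recv m, q') \<in> trans (Pr n)"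
    by (auto simp: recv_iff)
qed auto

definition gstep :: "nat \<Rightarrow> nat set \<Rightarrow> (nat \<Rightarrow> nat) \<Rightarrow> (nat \<Rightarrow> nat) \<Rightarrow> bool" where
  "gstep n V L L' \<longleftrightarrow> (\<exists>v\<in>V. \<exists>m. (L v, Bcast m, L' v) \<in> trans (Pr n) \<and>
     (\<forall>w\<in>V. w \<noteq> v \<longrightarrow> L' w = L w \<or> (L w, Recv m, L' w) \<in> trans (Pr n)))"

definition wv :: "nat \<Rightarrow> nat \<Rightarrow> nat" where "wv n q = (if q \<le> Suc n then q else 0)"
definition Phi :: "nat \<Rightarrow> nat set \<Rightarrow> (nat \<Rightarrow> nat) \<Rightarrow> nat" where
  "Phi n V L = (\<Sum>w\<in>V. wv n (L w))"
definition Dd :: "nat \<Rightarrow> nat set \<Rightarrow> (nat \<Rightarrow> nat) \<Rightarrow> nat" where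
  "Dd n V L = card {w\<in>V. L w = Suc n}"
definition Inv :: "nat \<Rightarrow> nat set \<Rightarrow> (nat \<Rightarrow> nat) \<Rightarrow> bool" where
  "Inv n V L \<longleftrightarrow> (\<forall>w\<in>V. L w - (n+2) \<le> Dd n V L)"

lemma Phi_step:
  assumes "finite V" "gstep n V L L'"
  shows "Phi n V L' = Suc (Phi n V L)"
proof -
  obtain v m where v: "v \<in> V" and b: "(L v, Bcast m, L' v) \<in> trans (Pr n)"
    and o: "\<forall>w\<in>V. w \<noteq> v \<longrightarrow> L' w = L w \<or> (L w, Recv m, L' w) \<in> trans (Pr n)"
    using assms(2) unfolding gstep_def by blast
  have eq: "(\<Sum>w\<in>V-{v}. wv n (L' w)) = (\<Sum>w\<in>V-{v}. wv n (L w))"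
  proof (rule sum.cong)
    fix w assume "w \<in> V - {v}"
    then have "L' w = L w \<or> (L w, Recv m, L' w) \<in> trans (Pr n)" using o by auto
    then show "wv n (L' w) = wv n (L w)" by (auto simp: recv_iff wv_def)
  qed simp
  have bv: "wv n (L' v) = Suc (wv n (L v))" using b by (auto simp: bcast_iff wv_def)
  show ?thesis unfolding Phi_def
    using sum.remove[OF assms(1) v, of "\<lambda>w. wv n (L' w)"] sum.remove[OF assms(1) v, of "\<lambda>w. wv n (L w)"]
      eq bv by simp
qed

lemma Inv_step:
  assumes "finite V" "gstep n V L L'" "Inv n V L"
  shows "Inv n V L'"
proof -
  obtain v m where v: "v \<in> V" and b: "(L v, Bcast m, L' v) \<in> trans (Pr n)"
    and o: "\<forall>w\<in>V. w \<noteq> v \<longrightarrow> L' w = L w \<or> (L w, Recv m, L' w) \<in> trans (Pr n)"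
    using assms(2) unfolding gstep_def by blast
  let ?S = "{w\<in>V. L w = Suc n}" and ?S' = "{w\<in>V. L' w = Suc n}"
  have sub: "?S \<subseteq> ?S'"
  proof
    fix w assume w: "w \<in> ?S"
    have "w \<noteq> v" using w b by (auto simp: bcast_iff)
    then show "w \<in> ?S'" using o w by (auto simp: recv_iff)
  qed
  have fin: "finite ?S'" using assms(1) by simp
  have mono: "Dd n V L \<le> Dd n V L'" unfolding Dd_def using card_mono[OF fin sub] .
  have m1: "Dd n V L' \<ge> Suc (Dd n V L)" if "m = 1"
  proof -
    have "v \<in> ?S' - ?S" using b v that by (auto simp: bcast_iff)
    then have "?S \<subset> ?S'" using sub by blast
    then show ?thesis unfolding Dd_def using psubset_card_mono[OF fin] by (simp add: Suc_le_eq)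
  qed
  show ?thesis unfolding Inv_def
  proof
    fix w assume w: "w \<in> V"
    show "L' w - (n+2) \<le> Dd n V L'"
    proof (cases "w = v")
      case True then show ?thesis using b by (auto simp: bcast_iff)
    next
      case False
      then have "L' w = L w \<or> (L w, Recv m, L' w) \<in> trans (Pr n)" using o w by auto
      moreover have "L w - (n+2) \<le> Dd n V L" using assms(3) w unfolding Inv_def by auto
      ultimately show ?thesis using mono m1 by (auto simp: recv_iff)
    qed
  qed
qed

lemma Phi_ge: assumes "finite V" shows "Suc n * Dd n V L \<le> Phi n V L"
proof -
  have "Suc n * Dd n V L = (\<Sum>w\<in>{w\<in>V. L w = Suc n}. wv n (L w))"
    unfolding Dd_def by (simp add: wv_def)
  also have "\<dots> \<le> Phi n V L" unfolding Phi_def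
    by (rule sum_mono2) (use assms in auto)
  finally show ?thesis .
qed

lemma Dd_le: assumes "finite V" shows "Dd n V L \<le> card V"
  unfolding Dd_def by (rule card_mono) (use assms in auto)

lemma exec_inv:
  assumes ex: "is_exec (Pr n) st cs"
    and stp: "\<And>c c'. st c c' \<Longrightarrow> fst c' = fst c \<and> gstep n (fst c) (snd (snd c)) (snd (snd c'))"
  shows "i < length cs \<Longrightarrow> fst (cs!i) = fst (hd cs) \<and> Phi n (fst (hd cs)) (snd (snd (cs!i))) = i
     \<and> Inv n (fst (hd cs)) (snd (snd (cs!i)))"
proof (induction i)
  case 0
  obtain V E L where h: "hd cs = (V, E, L)" by (cases "hd cs") auto
  have ne: "cs \<noteq> []" using ex unfolding is_exec_def by auto
  have ini: "L ` V \<subseteq> {0, n+2}" using ex h unfolding is_exec_def is_initial_def by auto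
  have "Phi n V L = 0" unfolding Phi_def
    by (rule sum.neutral) (use ini in \<open>auto simp: wv_def\<close>)
  moreover have "Inv n V L" unfolding Inv_def using ini by auto
  ultimately show ?case using h ne by (simp add: hd_conv_nth)
next
  case (Suc i)
  then have IH: "fst (cs!i) = fst (hd cs)" "Phi n (fst (hd cs)) (snd (snd (cs!i))) = i"
     "Inv n (fst (hd cs)) (snd (snd (cs!i)))" by auto
  have s: "st (cs!i) (cs!Suc i)" using ex Suc.prems unfolding is_exec_def by auto
  obtain V E L where h: "hd cs = (V, E, L)" by (cases "hd cs") auto
  have fin: "finite (fst (hd cs))" using ex h unfolding is_exec_def is_initial_def is_config_def is_graph_def
    by auto
  from stp[OF s] IH have g: "gstep n (fst (hd cs)) (snd (snd (cs!i))) (snd (snd (cs!Suc i)))"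
    and f: "fst (cs!Suc i) = fst (hd cs)" by auto
  show ?case using Phi_step[OF fin g] Inv_step[OF fin g] IH f by simp
qed

lemma reconf_g: "reconf_step (Pr n) c c' \<Longrightarrow> fst c' = fst c \<and> gstep n (fst c) (snd (snd c)) (snd (snd c'))"
  unfolding reconf_step_def gstep_def bcast_ok_def
  by (cases c; cases c'; auto; blast)

lemma lossy_g: "lossy_step (Pr n) c c' \<Longrightarrow> fst c' = fst c \<and> gstep n (fst c) (snd (snd c)) (snd (snd c'))"
  unfolding lossy_step_def gstep_def bcast_ok_def
  by (cases c; cases c'; auto; blast)

lemma lower:
  assumes ex: "is_exec (Pr n) st cs"
    and stp: "\<And>c c'. st c c' \<Longrightarrow> fst c' = fst c \<and> gstep n (fst c) (snd (snd c)) (snd (snd c'))"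
    and cov: "covers cs {2*n+2}"
  shows "n \<le> exec_nodes cs \<and> n * n \<le> exec_length cs"
proof -
  have ne: "cs \<noteq> []" using ex unfolding is_exec_def by auto
  let ?i = "length cs - 1"
  have li: "?i < length cs" using ne by simp
  have lst: "last cs = cs ! ?i" using ne by (simp add: last_conv_nth)
  note I = exec_inv[OF ex stp li]
  obtain V E L where h: "hd cs = (V, E, L)" by (cases "hd cs") auto
  have fin: "finite V" using ex h unfolding is_exec_def is_initial_def is_config_def is_graph_def
    by auto
  obtain V' E' L' where l0: "last cs = (V', E', L')" by (cases "last cs") auto
  then have "V' = V" using I h lst by simp
  with l0 have l: "last cs = (V, E', L')" by simp
  obtain u where u: "u \<in> V" "L' u = 2*n+2" using cov l unfolding covers_def by auto
  have ci: "cs ! ?i = (V, E', L')" using l lst by simp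
  have Iv: "Inv n V L'" and Ph: "Phi n V L' = ?i" using I unfolding h ci by auto
  have "n \<le> Dd n V L'" using Iv u unfolding Inv_def by force
  moreover have "Dd n V L' \<le> card V" by (rule Dd_le[OF fin])
  moreover have "Suc n * Dd n V L' \<le> ?i" using Phi_ge[OF fin, of n L'] Ph by simp
  ultimately have "n \<le> card V" "n * n \<le> ?i"
    using mult_le_mono[of n "Suc n" n "Dd n V L'"] by linarith+
  then show ?thesis unfolding exec_nodes_def exec_length_def using h by simp
qed

definition Vn :: "nat \<Rightarrow> nat set" where "Vn n = {..n}"
definition En :: "nat \<Rightarrow> (nat \<times> nat) set" where "En n = {(a, b). a \<le> n \<and> b \<le> n \<and> a \<noteq> b}"
definition lab :: "nat \<Rightarrow> nat \<Rightarrow> nat \<Rightarrow> nat \<Rightarrow> nat" where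
  "lab n k j x = (if x = 0 then n+2+k else if x \<le> k then Suc n else if x = Suc k then j else 0)"

definition Sr :: "nat \<Rightarrow> nat config \<Rightarrow> nat config \<Rightarrow> bool" where
  "Sr n c c' \<longleftrightarrow> (\<exists>L L'. c = (Vn n, En n, L) \<and> c' = (Vn n, En n, L') \<and> is_config (Pr n) c' \<and>
     (\<exists>v m. bcast_ok (Pr n) (Vn n) (En n) L L' v m))"

lemma Sr_reconf: "Sr n c c' \<Longrightarrow> reconf_step (Pr n) c c'"
  unfolding Sr_def reconf_step_def by auto

lemma Sr_lossy: "Sr n c c' \<Longrightarrow> lossy_step (Pr n) c c'"
  unfolding Sr_def lossy_step_def by blast

lemma Sr_config: "Sr n c c' \<Longrightarrow> is_config (Pr n) c'"
  unfolding Sr_def by auto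

lemma exec_from:
  assumes "(Sr n)\<^sup>*\<^sup>* c0 c" "is_initial (Pr n) c0" "\<And>c c'. Sr n c c' \<Longrightarrow> st c c'"
  shows "\<exists>cs. is_exec (Pr n) st cs \<and> last cs = c"
  using assms(1)
proof (induction rule: rtranclp_induct)
  case base
  have "is_config (Pr n) c0" using assms(2) unfolding is_initial_def by (cases c0) auto
  then show ?case using assms(2) by (intro exI[of _ "[c0]"]) (auto simp: is_exec_def)
next
  case (step c c')
  then obtain cs where cs: "is_exec (Pr n) st cs" "last cs = c" by blast
  have ne: "cs \<noteq> []" using cs unfolding is_exec_def by auto
  have "is_exec (Pr n) st (cs @ [c'])"
    unfolding is_exec_def
  proof (intro conjI allI impI)
    show "is_initial (Pr n) (hd (cs @ [c']))" using cs ne unfolding is_exec_def by simp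
    show "\<forall>x\<in>set (cs @ [c']). is_config (Pr n) x" using cs Sr_config[OF step(2)] unfolding is_exec_def by auto
    fix i assume i: "Suc i < length (cs @ [c'])"
    show "st ((cs @ [c']) ! i) ((cs @ [c']) ! Suc i)"
    proof (cases "Suc i < length cs")
      case True then show ?thesis using cs unfolding is_exec_def by (simp add: nth_append)
    next
      case False
      then have "i = length cs - 1" using i by simp
      then have "(cs @ [c']) ! i = c" "(cs @ [c']) ! Suc i = c'" using ne cs(2)
        by (auto simp: nth_append last_conv_nth)
      then show ?thesis using assms(3)[OF step(2)] by simp
    qed
  qed simp
  then show ?case by (intro exI[of _ "cs @ [c']"]) simp
qed

lemma graph_n: "is_graph (Vn n) (En n)"
  unfolding is_graph_def Vn_def En_def sym_def irrefl_def by auto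

lemma tick: assumes "k < n" "j < n"
  shows "Sr n (Vn n, En n, lab n k j) (Vn n, En n, lab n k (Suc j))"
  unfolding Sr_def
proof (intro exI conjI)
  show "is_config (Pr n) (Vn n, En n, lab n k (Suc j))"
    unfolding is_config_def using graph_n assms by (auto simp: lab_def Vn_def)
  show "bcast_ok (Pr n) (Vn n) (En n) (lab n k j) (lab n k (Suc j)) (Suc k) 0"
    unfolding bcast_ok_def using assms by (auto simp: lab_def Vn_def En_def bcast_iff recv_iff)
qed auto

lemma tok: assumes "k < n"
  shows "Sr n (Vn n, En n, lab n k n) (Vn n, En n, lab n (Suc k) 0)"
  unfolding Sr_def
proof (intro exI conjI)
  show "is_config (Pr n) (Vn n, En n, lab n (Suc k) 0)"
    unfolding is_config_def using graph_n assms by (auto simp: lab_def Vn_def)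
  show "bcast_ok (Pr n) (Vn n) (En n) (lab n k n) (lab n (Suc k) 0) (Suc k) 1"
    unfolding bcast_ok_def using assms by (auto simp: lab_def Vn_def En_def bcast_iff recv_iff)
qed auto

lemma ticks: assumes "k < n" shows "j \<le> n \<Longrightarrow> (Sr n)\<^sup>*\<^sup>* (Vn n, En n, lab n k 0) (Vn n, En n, lab n k j)"
proof (induction j)
  case (Suc j)
  then show ?case using tick[OF assms, of j] by (meson Suc_leD Suc_le_lessD rtranclp.rtrancl_into_rtrancl)
qed simp

lemma workers: "k \<le> n \<Longrightarrow> (Sr n)\<^sup>*\<^sup>* (Vn n, En n, lab n 0 0) (Vn n, En n, lab n k 0)"
proof (induction k)
  case (Suc k)
  then have k: "k < n" by simp
  have "(Sr n)\<^sup>*\<^sup>* (Vn n, En n, lab n 0 0) (Vn n, En n, lab n k n)"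
    using Suc k ticks[OF k, of n] by (meson Suc_leD rtranclp_trans order_refl)
  then show ?case using tok[OF k] by (meson rtranclp.rtrancl_into_rtrancl)
qed simp

lemma initial_n: "is_initial (Pr n) (Vn n, En n, lab n 0 0)"
  unfolding is_initial_def is_config_def using graph_n by (auto simp: lab_def Vn_def)

lemma covers_n: "last cs = (Vn n, En n, lab n n 0) \<Longrightarrow> covers cs {2*n+2}"
  unfolding covers_def by (auto simp: Vn_def lab_def)

theorem theorem3p8:
  "\<exists>(P :: nat \<Rightarrow> (nat, nat) protocol) (F :: nat \<Rightarrow> nat set).
     (\<forall>n. is_protocol (P n) \<and> F n \<subseteq> states (P n)) \<and>
     (\<exists>C::real. \<exists>N. \<forall>n\<ge>N. real (card (states (P n))) \<le> C * real n) \<and>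
     (\<forall>n. (\<exists>cs. reconf_exec (P n) cs \<and> covers cs (F n)) \<and>
          (\<exists>cs. lossy_exec (P n) cs \<and> covers cs (F n))) \<and>
     (\<exists>c::real. c > 0 \<and> (\<exists>N. \<forall>n\<ge>N. \<forall>cs.
        (reconf_exec (P n) cs \<or> lossy_exec (P n) cs) \<and> covers cs (F n) \<longrightarrow>
          real (exec_nodes cs) \<ge> c * real n \<and> real (exec_length cs) \<ge> c * (real n)^2))"
proof (intro exI[of _ Pr] exI[of _ "\<lambda>n. {2*n+2}"] conjI allI)
  fix n
  show "is_protocol (Pr n)" by (rule Pr_protocol)
  show "{2*n+2} \<subseteq> states (Pr n)" by simp
  have r: "(Sr n)\<^sup>*\<^sup>* (Vn n, En n, lab n 0 0) (Vn n, En n, lab n n 0)" by (rule workers) simp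
  show "\<exists>cs. reconf_exec (Pr n) cs \<and> covers cs {2*n+2}"
    using exec_from[OF r initial_n, of "reconf_step (Pr n)"] Sr_reconf covers_n
    unfolding reconf_exec_def by blast
  show "\<exists>cs. lossy_exec (Pr n) cs \<and> covers cs {2*n+2}"
    using exec_from[OF r initial_n, of "lossy_step (Pr n)"] Sr_lossy covers_n
    unfolding lossy_exec_def by blast
next
  show "\<exists>C::real. \<exists>N. \<forall>n\<ge>N. real (card (states (Pr n))) \<le> C * real n"
    by (intro exI[of _ 5] exI[of _ 1]) auto
next
  show "\<exists>c::real. c > 0 \<and> (\<exists>N. \<forall>n\<ge>N. \<forall>cs.
        (reconf_exec (Pr n) cs \<or> lossy_exec (Pr n) cs) \<and> covers cs {2*n+2} \<longrightarrow>
          real (exec_nodes cs) \<ge> c * real n \<and> real (exec_length cs) \<ge> c * (real n)^2)"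
  proof (intro exI[of _ 1] exI[of _ 0] conjI allI impI)
    fix n cs assume a: "(reconf_exec (Pr n) cs \<or> lossy_exec (Pr n) cs) \<and> covers cs {2*n+2}"
    have "n \<le> exec_nodes cs \<and> n * n \<le> exec_length cs"
      using a lower[of n _ cs] reconf_g lossy_g unfolding reconf_exec_def lossy_exec_def by blast
    then have "real n \<le> real (exec_nodes cs)" "real n * real n \<le> real (exec_length cs)"
      by (simp, metis of_nat_le_iff of_nat_mult)
    then show "real (exec_nodes cs) \<ge> 1 * real n" "real (exec_length cs) \<ge> 1 * (real n)^2"
      by (auto simp: power2_eq_square)
  qed simp
qed

end
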